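(* Let $a\geq 3$ and $m\geq 1$ be integers. There is a bijective correspondence between right $0$-pyramids of pieces of length $a$ and of size $m$, and positive $(am,m)$-strings.
   Context: A string is a finite sequence of $0$'s and $1$'s; an $(n,m)$-string is a string of length $n$ with exactly $m$ $1$'s. An $(am,m)$-string $x_1\dots x_{am}$ is positive if $t_s=\sum_{u=1}^s(a\,x_u-1)\geq 0$ for all $s=1,\dots,am$. A piece is an open interval $]s,s+a[$ with $s\in\mathbb Z$; two pieces are concurrent iff their intervals intersect. A heap is a finite configuration obtained by successively dropping pieces vertically towards the horizontal axis, each coming to rest on the axis or on top of the highest previously placed piece whose interval meets its own; configurations (not dropping orders) are counted. A pyramid is a heap with a unique bottom piece (exactly one piece on the axis); its size is its number of pieces. A right $0$-pyramid is a pyramid whose bottom piece covers $]0,a[$ and is a leftmost piece (no piece covers $]t,t+a[$ with $t<0$). *)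

theory Defs
  imports Complex_Main
begin

(* A placed piece is a pair (s, h): it covers the open interval ]s, s+a[ and sits at level h
   (level 0 = resting on the horizontal axis). *)

definition piece :: "nat \<Rightarrow> int \<Rightarrow> real set" where
  "piece a s = {x. real_of_int s < x \<and> x < real_of_int s + real a}"

definition concurrent :: "nat \<Rightarrow> int \<Rightarrow> int \<Rightarrow> bool" where
  "concurrent a s t \<longleftrightarrow> piece a s \<inter> piece a t \<noteq> {}"

definition drop_level :: "nat \<Rightarrow> (int \<times> nat) set \<Rightarrow> int \<Rightarrow> nat" where
  "drop_level a H s =
     (if \<exists>(t, h) \<in> H. concurrent a s t
      then Suc (Max {h. \<exists>t. (t, h) \<in> H \<and> concurrent a s t})
      else 0)"

inductive_set heaps :: "nat \<Rightarrow> (int \<times> nat) set set" for a :: nat where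
  empty: "{} \<in> heaps a"
| drop: "H \<in> heaps a \<Longrightarrow> insert (s, drop_level a H s) H \<in> heaps a"

definition pyramid :: "nat \<Rightarrow> (int \<times> nat) set \<Rightarrow> bool" where
  "pyramid a H \<longleftrightarrow> H \<in> heaps a \<and> card {p \<in> H. snd p = 0} = 1"

definition right0_pyramid :: "nat \<Rightarrow> (int \<times> nat) set \<Rightarrow> bool" where
  "right0_pyramid a H \<longleftrightarrow> pyramid a H \<and> (0, 0) \<in> H \<and> (\<forall>(t, h) \<in> H. 0 \<le> t)"

definition nm_string :: "nat \<Rightarrow> nat \<Rightarrow> nat list \<Rightarrow> bool" where
  "nm_string n m xs \<longleftrightarrow> set xs \<subseteq> {0, 1} \<and> length xs = n \<and> count_list xs 1 = m"

definition positive_string :: "nat \<Rightarrow> nat \<Rightarrow> nat list \<Rightarrow> bool" where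
  "positive_string a m xs \<longleftrightarrow> nm_string (a * m) m xs \<and>
     (\<forall>s \<in> {1..a * m}. (\<Sum>u = 1..s. int a * int (xs ! (u - 1)) - 1) \<ge> 0)"

end

theory Submission
  imports Defs
begin


fun pos :: "nat \<Rightarrow> int \<Rightarrow> nat list \<Rightarrow> bool" where
  "pos a c [] = (c = 0)"
| "pos a c (x # w) = (0 \<le> c \<and> (x = 0 \<or> x = 1) \<and> pos a (c + int a * int x - 1) w)"

fun vq :: "nat \<Rightarrow> int \<Rightarrow> int list \<Rightarrow> bool" where
  "vq a c [] = True"
| "vq a c (q # qs) = (0 \<le> q \<and> q \<le> c \<and> vq a (q + int a - 1) qs)"

fun dec :: "nat \<Rightarrow> int \<Rightarrow> nat list \<Rightarrow> int list" where
  "dec a c [] = []"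
| "dec a c (x # w) = (if x = 1 then c # dec a (c + int a - 1) w else dec a (c - 1) w)"

fun enc :: "nat \<Rightarrow> int \<Rightarrow> int list \<Rightarrow> nat list" where
  "enc a c [] = replicate (nat c) 0"
| "enc a c (q # qs) = replicate (nat (c - q)) 0 @ 1 # enc a (q + int a - 1) qs"

lemma vq_mono: "vq a c qs \<Longrightarrow> c \<le> c' \<Longrightarrow> vq a c' qs"
  by (cases qs) auto

lemma pos_nonneg: "pos a c w \<Longrightarrow> 0 \<le> c"
  by (cases w) auto

lemma pos_dec: "pos a c w \<Longrightarrow> vq a c (dec a c w) \<and> length (dec a c w) = count_list w 1"
proof (induction w arbitrary: c)
  case Nil then show ?case by simp
next
  case (Cons x w)
  show ?case
  proof (cases "x = 1")
    case True
    with Cons.prems have "pos a (c + int a - 1) w" "0 \<le> c" by auto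
    with Cons.IH True show ?thesis by auto
  next
    case False
    with Cons.prems have x0: "x = 0" and p: "pos a (c - 1) w" by auto
    from Cons.IH[OF p] show ?thesis using x0 by (auto intro: vq_mono)
  qed
qed

lemma pos_rep: "0 \<le> c - int n \<Longrightarrow> pos a c (replicate n 0 @ w) = pos a (c - int n) w"
  by (induction n arbitrary: c) (auto simp: algebra_simps)

lemma dec_rep: "dec a c (replicate n 0 @ w) = dec a (c - int n) w"
  by (induction n arbitrary: c) (auto simp: algebra_simps)

lemma enc_ok: "vq a c qs \<Longrightarrow> 0 \<le> c \<Longrightarrow> 0 < a \<Longrightarrow>
   pos a c (enc a c qs) \<and> dec a c (enc a c qs) = qs \<and> count_list (enc a c qs) 1 = length qs"
proof (induction qs arbitrary: c)
  case Nil
  then show ?case using pos_rep[of c "nat c" a "[]"] dec_rep[of a c "nat c" "[]"]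
    by (simp add: count_list_0_iff)
next
  case (Cons q qs)
  then have q: "0 \<le> q" "q \<le> c" "vq a (q + int a - 1) qs" by auto
  have ih: "pos a (q + int a - 1) (enc a (q + int a - 1) qs) \<and>
     dec a (q + int a - 1) (enc a (q + int a - 1) qs) = qs \<and>
     count_list (enc a (q + int a - 1) qs) 1 = length qs"
    using Cons q by auto
  have e: "c - int (nat (c - q)) = q" using q by simp
  show ?case using ih q pos_rep[of c "nat (c - q)" a] dec_rep[of a c "nat (c - q)"] e
    by (simp add: count_list_append)
qed

lemma enc_shift: "vq a (c - 1) qs \<Longrightarrow> 1 \<le> c \<Longrightarrow> enc a c qs = 0 # enc a (c - 1) qs"
proof (cases qs)
  case Nil
  assume "1 \<le> c"
  then have "nat c = Suc (nat (c - 1))" by simp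
  then show ?thesis using Nil by simp
next
  case (Cons q r)
  assume "vq a (c - 1) qs" "1 \<le> c"
  then have "nat (c - q) = Suc (nat (c - 1 - q))" using Cons by auto
  then show ?thesis using Cons by simp
qed

lemma enc_dec: "pos a c w \<Longrightarrow> enc a c (dec a c w) = w"
proof (induction w arbitrary: c)
  case Nil then show ?case by simp
next
  case (Cons x w)
  show ?case
  proof (cases "x = 1")
    case True
    with Cons show ?thesis by auto
  next
    case False
    with Cons.prems have x0: "x = 0" and p: "pos a (c - 1) w" by auto
    have "0 \<le> c - 1" using pos_nonneg[OF p] .
    then have "enc a c (dec a (c - 1) w) = 0 # enc a (c - 1) (dec a (c - 1) w)"
      using enc_shift pos_dec[OF p] by auto
    then show ?thesis using Cons.IH[OF p] x0 by simp
  qed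
qed

definition T :: "nat \<Rightarrow> nat list \<Rightarrow> nat \<Rightarrow> int" where
  "T a xs s = (\<Sum>i<s. int a * int (xs ! i) - 1)"

lemma T_0[simp]: "T a xs 0 = 0" by (simp add: T_def)
lemma T_Suc[simp]: "T a (x # xs) (Suc s) = int a * int x - 1 + T a xs s"
  unfolding T_def by (simp only: sum.lessThan_Suc_shift) simp

lemma all_le_Suc: "(\<forall>s\<le>Suc n. P s) = (P 0 \<and> (\<forall>s\<le>n. P (Suc s)))"
  by (metis Suc_le_mono le0 not0_implies_Suc)

lemma pos_iff: "pos a c xs \<longleftrightarrow> set xs \<subseteq> {0,1} \<and> (\<forall>s\<le>length xs. 0 \<le> c + T a xs s) \<and> c + T a xs (length xs) = 0"
proof (induction xs arbitrary: c)
  case Nil then show ?case by auto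
next
  case (Cons x xs)
  show ?case
    unfolding pos.simps Cons.IH length_Cons all_le_Suc T_Suc T_0
    by (auto simp: algebra_simps)
qed

lemma T_total: "set xs \<subseteq> {0,1} \<Longrightarrow> T a xs (length xs) = int a * int (count_list xs 1) - int (length xs)"
proof (induction xs)
  case Nil then show ?case by simp
next
  case (Cons x xs)
  then show ?case by (auto simp: algebra_simps)
qed

lemma positive_iff: "positive_string a m xs \<longleftrightarrow> pos a 0 xs \<and> count_list xs 1 = m"
proof
  assume h: "positive_string a m xs"
  then have s: "set xs \<subseteq> {0,1}" and l: "length xs = a * m" and c: "count_list xs 1 = m"
    and p: "\<forall>s\<in>{1..a * m}. (\<Sum>u = 1..s. int a * int (xs ! (u - 1)) - 1) \<ge> 0"
    unfolding positive_string_def nm_string_def by auto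
  have eq: "(\<Sum>u = 1..s. int a * int (xs ! (u - 1)) - 1) = T a xs s" for s
    unfolding T_def by (simp add: sum.atLeast1_atMost_eq)
  have "\<forall>s\<le>length xs. 0 \<le> 0 + T a xs s"
  proof (intro allI impI)
    fix s assume "s \<le> length xs"
    then show "0 \<le> 0 + T a xs s" using p eq l by (cases "s = 0") auto
  qed
  moreover have "0 + T a xs (length xs) = 0" using T_total[OF s] l c by simp
  ultimately show "pos a 0 xs \<and> count_list xs 1 = m" using pos_iff s c by blast
next
  assume h: "pos a 0 xs \<and> count_list xs 1 = m"
  then have s: "set xs \<subseteq> {0,1}" and p: "\<forall>s\<le>length xs. 0 \<le> T a xs s"
    and t: "T a xs (length xs) = 0" and c: "count_list xs 1 = m"
    using pos_iff[of a 0 xs] by auto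
  have l: "length xs = a * m" using T_total[OF s] t c
    by (metis eq_iff_diff_eq_0 of_nat_eq_iff of_nat_mult)
  have eq: "(\<Sum>u = 1..s. int a * int (xs ! (u - 1)) - 1) = T a xs s" for s
    unfolding T_def by (simp add: sum.atLeast1_atMost_eq)
  show "positive_string a m xs"
    unfolding positive_string_def nm_string_def using s l c p eq by auto
qed




lemma conc_iff: "concurrent a s t \<longleftrightarrow> \<bar>s - t\<bar> < int a"
proof
  assume "concurrent a s t"
  then obtain x where x: "real_of_int s < x" "x < real_of_int s + real a"
     "real_of_int t < x" "x < real_of_int t + real a"
    unfolding concurrent_def piece_def by auto
  then have "real_of_int (s - t) < real_of_int (int a)" "real_of_int (t - s) < real_of_int (int a)"
    by auto
  then have "s - t < int a" "t - s < int a" by (simp_all only: of_int_less_iff)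
  then show "\<bar>s - t\<bar> < int a" by auto
next
  assume h: "\<bar>s - t\<bar> < int a"
  then have "s - t \<le> int a - 1" "t - s \<le> int a - 1" by auto
  then have r: "real_of_int s - real_of_int t \<le> real a - 1" "real_of_int t - real_of_int s \<le> real a - 1"
    by (metis of_int_diff of_int_le_iff of_int_of_nat_eq of_int_1)+
  define x where "x = real_of_int (max s t) + 1/2"
  have "x \<in> piece a s \<inter> piece a t"
    unfolding piece_def x_def using r by (auto simp: max_def)
  then show "concurrent a s t" unfolding concurrent_def by auto
qed

lemma conc_sym: "concurrent a s t = concurrent a t s"
  by (simp add: conc_iff abs_minus_commute)

lemma conc_refl: "0 < a \<Longrightarrow> concurrent a s s"
  by (simp add: conc_iff)

lemma dl_gt: "finite H \<Longrightarrow> (t, h) \<in> H \<Longrightarrow> concurrent a s t \<Longrightarrow> h < drop_level a H s"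
proof -
  assume f: "finite H" and th: "(t, h) \<in> H" and c: "concurrent a s t"
  have fin: "finite {h. \<exists>t. (t, h) \<in> H \<and> concurrent a s t}"
    by (rule finite_subset[of _ "snd ` H"]) (use f in force)+
  have "h \<le> Max {h. \<exists>t. (t, h) \<in> H \<and> concurrent a s t}"
    using th c by (intro Max_ge[OF fin]) auto
  moreover have "\<exists>(t, h) \<in> H. concurrent a s t" using th c by auto
  ultimately show ?thesis unfolding drop_level_def by auto
qed

lemma dl_support: "finite H \<Longrightarrow> drop_level a H s = Suc k \<Longrightarrow> \<exists>t. (t, k) \<in> H \<and> concurrent a s t"
proof -
  assume f: "finite H" and d: "drop_level a H s = Suc k"
  have fin: "finite {h. \<exists>t. (t, h) \<in> H \<and> concurrent a s t}"
    by (rule finite_subset[of _ "snd ` H"]) (use f in force)+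
  have ex: "\<exists>(t, h) \<in> H. concurrent a s t"
    using d unfolding drop_level_def by (auto split: if_splits)
  then have ne: "{h. \<exists>t. (t, h) \<in> H \<and> concurrent a s t} \<noteq> {}" by auto
  have "k = Max {h. \<exists>t. (t, h) \<in> H \<and> concurrent a s t}"
    using d ex unfolding drop_level_def by auto
  then have "k \<in> {h. \<exists>t. (t, h) \<in> H \<and> concurrent a s t}"
    using Max_in[OF fin ne] by simp
  then show ?thesis by auto
qed

lemma dl_cong:
  assumes "{p \<in> H. concurrent a s (fst p)} = {p \<in> H'. concurrent a s (fst p)}"
  shows "drop_level a H s = drop_level a H' s"
proof -
  have e: "((t, h) \<in> H \<and> concurrent a s t) = ((t, h) \<in> H' \<and> concurrent a s t)" for t h
    using assms by (metis (mono_tags, lifting) fst_conv mem_Collect_eq)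
  have e1: "(\<exists>(t, h) \<in> H. concurrent a s t) = (\<exists>(t, h) \<in> H'. concurrent a s t)"
    using e by auto
  have e2: "{h. \<exists>t. (t, h) \<in> H \<and> concurrent a s t} = {h. \<exists>t. (t, h) \<in> H' \<and> concurrent a s t}"
    using e by auto
  show ?thesis unfolding drop_level_def e1 e2 ..
qed

definition D :: "nat \<Rightarrow> int list \<Rightarrow> (int \<times> nat) set" where
  "D a w = foldl (\<lambda>H s. insert (s, drop_level a H s) H) {} w"

lemma D_Nil[simp]: "D a [] = {}" by (simp add: D_def)
lemma D_snoc: "D a (w @ [s]) = insert (s, drop_level a (D a w) s) (D a w)"
  by (simp add: D_def)
lemma D_single: "D a [s] = {(s, drop_level a {} s)}"
  using D_snoc[of a "[]" s] by simp

lemma D_fin[simp]: "finite (D a w)"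
  by (induction w rule: rev_induct) (auto simp: D_snoc)

lemma D_new: "0 < a \<Longrightarrow> (s, drop_level a (D a w) s) \<notin> D a w"
  using dl_gt[OF D_fin, of s "drop_level a (D a w) s" a w a s] conc_refl by blast

lemma D_card: "0 < a \<Longrightarrow> card (D a w) = length w"
  by (induction w rule: rev_induct) (auto simp: D_snoc D_new)

lemma D_fst: "p \<in> D a w \<Longrightarrow> fst p \<in> set w"
  by (induction w rule: rev_induct) (auto simp: D_snoc)

lemma D_mono: "D a u \<subseteq> D a (u @ v)"
proof (induction v rule: rev_induct)
  case Nil then show ?case by simp
next
  case (snoc x v)
  have "D a (u @ v @ [x]) = D a ((u @ v) @ [x])" by simp
  also have "\<dots> = insert (x, drop_level a (D a (u @ v)) x) (D a (u @ v))" by (rule D_snoc)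
  finally show ?case using snoc by auto
qed

lemma D_support: "0 < a \<Longrightarrow> (t, h) \<in> D a w \<Longrightarrow> 0 < h \<Longrightarrow> \<exists>t'. (t', h - 1) \<in> D a w \<and> concurrent a t t'"
proof (induction w arbitrary: t h rule: rev_induct)
  case Nil then show ?case by simp
next
  case (snoc s w)
  show ?case
  proof (cases "(t, h) = (s, drop_level a (D a w) s)")
    case True
    then have "drop_level a (D a w) s = Suc (h - 1)" using snoc by auto
    from dl_support[OF D_fin this] True show ?thesis by (auto simp: D_snoc)
  next
    case False
    then have "(t, h) \<in> D a w" using snoc by (auto simp: D_snoc)
    from snoc.IH[OF snoc.prems(1) this snoc.prems(3)] show ?thesis by (auto simp: D_snoc)
  qed
qed

lemma D_samelevel: "0 < a \<Longrightarrow> (t, h) \<in> D a w \<Longrightarrow> (t', h) \<in> D a w \<Longrightarrow> concurrent a t t' \<Longrightarrow> t = t'"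
proof (induction w rule: rev_induct)
  case Nil then show ?case by simp
next
  case (snoc s w)
  let ?x = "(s, drop_level a (D a w) s)"
  consider "(t, h) = ?x" "(t', h) = ?x" | "(t, h) = ?x" "(t', h) \<in> D a w" |
     "(t', h) = ?x" "(t, h) \<in> D a w" | "(t, h) \<in> D a w" "(t', h) \<in> D a w"
    using snoc.prems by (auto simp: D_snoc)
  then show ?case
  proof cases
    case 1 then show ?thesis by simp
  next
    case 2 then show ?thesis using dl_gt[OF D_fin 2(2), of a s] snoc.prems(4) by auto
  next
    case 3 then show ?thesis using dl_gt[OF D_fin 3(2), of a s] snoc.prems(4) conc_sym by auto
  next
    case 4 then show ?thesis using snoc by blast
  qed
qed

lemma heaps_D: "H \<in> heaps a \<longleftrightarrow> (\<exists>w. H = D a w)"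
proof
  assume "H \<in> heaps a"
  then show "\<exists>w. H = D a w"
  proof induction
    case empty then show ?case by (metis D_Nil)
  next
    case (drop H s)
    then obtain w where "H = D a w" by auto
    then show ?case using D_snoc by metis
  qed
next
  assume "\<exists>w. H = D a w"
  then obtain w where "H = D a w" by auto
  moreover have "D a w \<in> heaps a"
    by (induction w rule: rev_induct) (auto simp: D_snoc intro: heaps.intros)
  ultimately show "H \<in> heaps a" by simp
qed




definition mx :: "nat \<Rightarrow> (int \<times> nat) set \<Rightarrow> int \<times> nat \<Rightarrow> bool" where
  "mx a H x \<longleftrightarrow> x \<in> H \<and> (\<forall>y\<in>H. concurrent a (fst x) (fst y) \<longrightarrow> snd y \<le> snd x)"

lemma mx_sub: "mx a H' x \<Longrightarrow> x \<in> H \<Longrightarrow> H \<subseteq> H' \<Longrightarrow> mx a H x"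
  unfolding mx_def by auto

lemma mx_new: "mx a (D a (w @ [s])) (s, drop_level a (D a w) s)"
  unfolding mx_def D_snoc using dl_gt[OF D_fin] by fastforce

lemma vq_snoc: "vq a c (w @ [s]) \<longleftrightarrow> vq a c w \<and> 0 \<le> s \<and> s \<le> (if w = [] then c else last w + int a - 1)"
  by (induction w arbitrary: c) auto

lemma vq_nonneg: "vq a c w \<Longrightarrow> s \<in> set w \<Longrightarrow> 0 \<le> s"
  by (induction w arbitrary: c) auto

lemma lastmax:
  assumes "0 < a" "vq a c (w @ [s])" "mx a (D a (w @ [s])) y" "y \<noteq> (s, drop_level a (D a w) s)"
  shows "s < fst y"
  using assms
proof (induction w arbitrary: s y rule: rev_induct)
  case Nil
  then show ?case unfolding mx_def D_snoc by simp
next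
  case (snoc r w0)
  let ?H0 = "D a (w0 @ [r])"
  let ?x = "(s, drop_level a ?H0 s)"
  have H: "D a ((w0 @ [r]) @ [s]) = insert ?x ?H0" by (rule D_snoc)
  from snoc.prems(2) have v: "vq a c (w0 @ [r])" and sr: "s \<le> r + int a - 1"
    unfolding vq_snoc by auto
  have yH0: "y \<in> ?H0" using snoc.prems(3,4) H unfolding mx_def by auto
  have my: "mx a ?H0 y" using mx_sub[OF snoc.prems(3) yH0] H by auto
  have nc: "\<not> concurrent a s (fst y)"
  proof
    assume c: "concurrent a s (fst y)"
    have "snd y < snd ?x" using dl_gt[OF D_fin _ c, of "snd y"] yH0 by (cases y) auto
    moreover have "snd ?x \<le> snd y"
      using snoc.prems(3) H c conc_sym unfolding mx_def by auto
    ultimately show False by simp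
  qed
  have "r \<le> fst y"
  proof (cases "y = (r, drop_level a (D a w0) r)")
    case True then show ?thesis by simp
  next
    case False
    from snoc.IH[OF snoc.prems(1) v my False] show ?thesis by simp
  qed
  then show ?case using nc sr snoc.prems(1) unfolding conc_iff by auto
qed

lemma D_inj: "0 < a \<Longrightarrow> vq a c w1 \<Longrightarrow> vq a c w2 \<Longrightarrow> D a w1 = D a w2 \<Longrightarrow> w1 = w2"
proof (induction w1 arbitrary: w2 rule: rev_induct)
  case Nil
  then have "length w2 = 0" using D_card[of a w2] by simp
  then show ?case by simp
next
  case (snoc s1 u1)
  have "length w2 \<noteq> 0" using D_card[of a w2] D_card[of a "u1 @ [s1]"] snoc.prems by simp
  then obtain u2 s2 where w2: "w2 = u2 @ [s2]" by (metis length_0_conv rev_exhaust)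
  let ?x1 = "(s1, drop_level a (D a u1) s1)"
  let ?x2 = "(s2, drop_level a (D a u2) s2)"
  have m1: "mx a (D a (u1 @ [s1])) ?x1" by (rule mx_new)
  have m2: "mx a (D a (u1 @ [s1])) ?x2" using mx_new[of a u2 s2] snoc.prems w2 by simp
  have m1': "mx a (D a (u2 @ [s2])) ?x1" using m1 snoc.prems w2 by simp
  have m2': "mx a (D a (u2 @ [s2])) ?x2" by (rule mx_new)
  have eq: "?x1 = ?x2"
  proof (rule ccontr)
    assume ne: "?x1 \<noteq> ?x2"
    have ne2: "?x2 \<noteq> ?x1" using ne by metis
    have "s1 < fst ?x2" by (rule lastmax[OF snoc.prems(1,2) m2 ne2])
    moreover have "s2 < fst ?x1" using lastmax[OF snoc.prems(1), of c u2 s2 ?x1] snoc.prems(3) w2 m1' ne by blast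
    ultimately show False by simp
  qed
  then have s: "s1 = s2" by simp
  have "D a u1 = D a (u1 @ [s1]) - {?x1}" using D_snoc[of a u1 s1] D_new[OF snoc.prems(1), of s1 u1] by auto
  also have "\<dots> = D a (u2 @ [s2]) - {?x2}" using snoc.prems(4) w2 eq by metis
  also have "\<dots> = D a u2" using D_snoc[of a u2 s2] D_new[OF snoc.prems(1), of s2 u2] by auto
  finally have "D a u1 = D a u2" .
  moreover have "vq a c u1" using snoc.prems(2) vq_snoc by auto
  moreover have "vq a c u2" using snoc.prems(3) w2 vq_snoc by auto
  ultimately have "u1 = u2" using snoc.IH snoc.prems(1) by blast
  then show ?case using s w2 by simp
qed

lemma D_remove: "0 < a \<Longrightarrow> mx a (D a v) x \<Longrightarrow> \<exists>v'. D a v' = D a v - {x}"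
proof (induction v rule: rev_induct)
  case Nil then show ?case by (simp add: mx_def)
next
  case (snoc t v)
  let ?y = "(t, drop_level a (D a v) t)"
  have H: "D a (v @ [t]) = insert ?y (D a v)" by (rule D_snoc)
  show ?case
  proof (cases "x = ?y")
    case True
    then have "D a v = D a (v @ [t]) - {x}" using H D_new[OF snoc.prems(1), of t v] by auto
    then show ?thesis by blast
  next
    case False
    then have xv: "x \<in> D a v" using snoc.prems(2) H unfolding mx_def by auto
    have "mx a (D a v) x" using mx_sub[OF snoc.prems(2) xv] H by auto
    then obtain v' where v': "D a v' = D a v - {x}" using snoc.IH snoc.prems(1) by blast
    have nc: "\<not> concurrent a t (fst x)"
    proof
      assume c: "concurrent a t (fst x)"
      have "snd x < snd ?y" using dl_gt[OF D_fin _ c, of "snd x"] xv by (cases x) auto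
      moreover have "snd ?y \<le> snd x" using snoc.prems(2) H c conc_sym unfolding mx_def by auto
      ultimately show False by simp
    qed
    have "{p \<in> D a v'. concurrent a t (fst p)} = {p \<in> D a v. concurrent a t (fst p)}"
      using v' nc by auto
    then have "drop_level a (D a v') t = drop_level a (D a v) t" by (rule dl_cong)
    then have "D a (v' @ [t]) = D a (v @ [t]) - {x}" using D_snoc[of a v' t] H v' False by auto
    then show ?thesis by blast
  qed
qed

lemma D_right0:
  assumes a: "0 < a" and v: "vq a 0 w" and ne: "w \<noteq> []"
  shows "right0_pyramid a (D a w)"
proof -
  have inv: "{p \<in> D a w. snd p = 0} = {(0, 0)} \<and>
       (\<forall>t. 0 \<le> t \<and> t \<le> last w + int a - 1 \<longrightarrow> (\<exists>p\<in>D a w. concurrent a t (fst p)))"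
    using v ne
  proof (induction w rule: rev_induct)
    case Nil then show ?case by simp
  next
    case (snoc s w)
    show ?case
    proof (cases "w = []")
      case True
      then have s0: "s = 0" using snoc.prems by simp
      have "D a (w @ [s]) = {(0, 0)}" using True s0 D_single[of a 0] by (simp add: drop_level_def)
      moreover have "\<forall>t. 0 \<le> t \<and> t \<le> last (w @ [s]) + int a - 1 \<longrightarrow> concurrent a t 0"
        using s0 by (auto simp: conc_iff)
      ultimately show ?thesis by auto
    next
      case False
      from snoc.prems(1) False have vw: "vq a 0 w" and s: "0 \<le> s" "s \<le> last w + int a - 1"
        unfolding vq_snoc by auto
      from snoc.IH[OF vw False] have l0: "{p \<in> D a w. snd p = 0} = {(0, 0)}"
        and cov: "\<forall>t. 0 \<le> t \<and> t \<le> last w + int a - 1 \<longrightarrow> (\<exists>p\<in>D a w. concurrent a t (fst p))"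
        by auto
      obtain p where p: "p \<in> D a w" "concurrent a s (fst p)" using cov s by auto
      have "snd p < drop_level a (D a w) s" using dl_gt[OF D_fin _ p(2), of "snd p"] p(1) by (cases p) auto
      then have pos: "drop_level a (D a w) s \<noteq> 0" by simp
      have "{p \<in> D a (w @ [s]). snd p = 0} = {p \<in> D a w. snd p = 0}"
        using pos by (auto simp: D_snoc)
      moreover have "\<forall>t. 0 \<le> t \<and> t \<le> last (w @ [s]) + int a - 1 \<longrightarrow> (\<exists>p\<in>D a (w @ [s]). concurrent a t (fst p))"
      proof (intro allI impI)
        fix t assume t: "0 \<le> t \<and> t \<le> last (w @ [s]) + int a - 1"
        show "\<exists>p\<in>D a (w @ [s]). concurrent a t (fst p)"
        proof (cases "s - int a < t")
          case True
          then have "concurrent a t s" using t by (auto simp: conc_iff)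
          then show ?thesis by (auto simp: D_snoc)
        next
          case False
          then obtain p where "p \<in> D a w" "concurrent a t (fst p)" using cov s t a by fastforce
          then show ?thesis by (auto simp: D_snoc)
        qed
      qed
      ultimately show ?thesis using l0 by simp
    qed
  qed
  obtain q qs where w: "w = q # qs" using ne by (cases w) auto
  have q0: "q = 0" using v w by simp
  have "(0, 0) \<in> D a w"
    using D_mono[of a "[0]" qs] D_single[of a 0] w q0 by (auto simp: drop_level_def)
  moreover have "\<forall>(t, h)\<in>D a w. 0 \<le> t" using D_fst vq_nonneg[OF v] by fastforce
  moreover have "D a w \<in> heaps a" using heaps_D by blast
  ultimately show ?thesis using inv unfolding right0_pyramid_def pyramid_def by simp
qed




lemma D_level1: "0 < a \<Longrightarrow> (t, Suc k) \<in> D a v \<Longrightarrow> \<exists>t'. (t', Suc 0) \<in> D a v"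
proof (induction k arbitrary: t)
  case 0 then show ?case by blast
next
  case (Suc k)
  from D_support[OF Suc.prems(1,2)] obtain t' where "(t', Suc k) \<in> D a v" by auto
  then show ?case using Suc.IH Suc.prems(1) by blast
qed

lemma D_surj:
  assumes a: "0 < a"
  shows "right0_pyramid a H \<Longrightarrow> card H = Suc n \<Longrightarrow> \<exists>w. vq a 0 w \<and> D a w = H"
proof (induction n arbitrary: H)
  case 0
  then obtain z where "H = {z}" by (metis One_nat_def card_1_singletonE)
  moreover have "(0, 0) \<in> H" using 0 unfolding right0_pyramid_def by auto
  ultimately have "H = {(0, 0)}" by auto
  moreover have "D a [0] = {(0, 0)}" using D_single[of a 0] by (simp add: drop_level_def)
  ultimately show ?case by (intro exI[of _ "[0]"]) simp
next
  case (Suc n)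
  have r: "H \<in> heaps a" "card {p \<in> H. snd p = 0} = 1" "(0, 0) \<in> H" "\<forall>(t, h)\<in>H. 0 \<le> t"
    using Suc.prems unfolding right0_pyramid_def pyramid_def by auto
  obtain v where Hv: "H = D a v" using r(1) heaps_D by blast
  have fin: "finite H" using Hv by simp
  obtain z0 where "{p \<in> H. snd p = 0} = {z0}" using r(2) by (metis One_nat_def card_1_singletonE)
  then have lev0: "{p \<in> H. snd p = 0} = {(0, 0)}" using r(3) by auto
  have "\<exists>y\<in>H. 0 < snd y"
  proof (rule ccontr)
    assume "\<not> (\<exists>y\<in>H. 0 < snd y)"
    then have "H \<subseteq> {p \<in> H. snd p = 0}" by auto
    then have "card H \<le> card {(0::int, 0::nat)}" using lev0 by (intro card_mono) auto
    then have "card H \<le> 1" by simp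
    then show False using Suc.prems(2) by simp
  qed
  then obtain y where y: "y \<in> H" "0 < snd y" by auto
  then obtain k where "snd y = Suc k" by (metis gr0_implies_Suc)
  then have "(fst y, Suc k) \<in> D a v" using y Hv by (metis prod.collapse)
  from D_level1[OF a this] obtain t1 where t1: "(t1, Suc 0) \<in> H" using Hv by auto
  from D_support[OF a, of t1 "Suc 0" v] t1 Hv obtain t0 where "(t0, 0) \<in> H" "concurrent a t1 t0" by auto
  moreover then have "(t0, 0) \<in> {p \<in> H. snd p = 0}" by simp
  then have "t0 = 0" using lev0 by simp
  ultimately have c01: "concurrent a 0 t1" using conc_sym[of a t1 0] by simp
  have nm00: "\<not> mx a H (0, 0)"
  proof
    assume "mx a H (0, 0)"
    then have "\<forall>y\<in>H. concurrent a 0 (fst y) \<longrightarrow> snd y \<le> 0" unfolding mx_def by simp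
    then have "Suc 0 \<le> 0" using t1 c01 by fastforce
    then show False by simp
  qed
  define M where "M = {z \<in> H. mx a H z}"
  have finM: "finite M" using fin unfolding M_def by simp
  have "Max (snd ` H) \<in> snd ` H" using fin r(3) by (intro Max_in) auto
  then obtain zm where zm: "zm \<in> H" "snd zm = Max (snd ` H)" by auto
  have "mx a H zm" unfolding mx_def using zm fin Max_ge[of "snd ` H"] by auto
  then have Mne: "M \<noteq> {}" using zm unfolding M_def by blast
  have "Min (fst ` M) \<in> fst ` M" using finM Mne by (intro Min_in) auto
  then obtain x where x: "x \<in> M" "fst x = Min (fst ` M)" by auto
  have xleft: "\<forall>z\<in>M. fst x \<le> fst z" using x finM by auto
  have mxx: "mx a H x" and xH: "x \<in> H" using x unfolding M_def by auto
  have x00: "x \<noteq> (0, 0)" using mxx nm00 by auto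
  have sx: "0 < snd x"
  proof (rule ccontr)
    assume "\<not> 0 < snd x"
    then have "x \<in> {p \<in> H. snd p = 0}" using xH by auto
    then show False using lev0 x00 by auto
  qed
  obtain v' where v': "D a v' = H - {x}" using D_remove[OF a, of v x] mxx Hv by auto
  let ?H' = "H - {x}"
  have lev0': "{p \<in> ?H'. snd p = 0} = {p \<in> H. snd p = 0}" using sx by auto
  have h': "?H' \<in> heaps a" unfolding heaps_D using v'[symmetric] by blast
  have c': "card {p \<in> ?H'. snd p = 0} = 1" using lev0' lev0 by simp
  have z': "(0, 0) \<in> ?H'" using r(3) x00 by simp
  have p': "\<forall>(t, h)\<in>?H'. 0 \<le> t" using r(4) by auto
  have r': "right0_pyramid a ?H'"
    unfolding right0_pyramid_def pyramid_def using h' c' z' p' by blast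
  have cH': "card ?H' = Suc n" using Suc.prems(2) xH fin by simp
  obtain w' where w': "vq a 0 w'" "D a w' = ?H'" using Suc.IH[OF r' cH'] by auto
  have w'ne: "w' \<noteq> []"
  proof
    assume "w' = []"
    with w'(2) have "?H' = {}" by simp
    with cH' show False by simp
  qed
  have "(fst x, snd x) \<in> D a v" using xH Hv by simp
  from D_support[OF a this sx] obtain t' where t': "(t', snd x - 1) \<in> H" "concurrent a (fst x) t'"
    using Hv by blast
  moreover have "(t', snd x - 1) \<noteq> x" using sx by (metis diff_less less_numeral_extra(1) order_less_irrefl snd_conv)
  ultimately have "(t', snd x - 1) \<in> ?H'" by simp
  from dl_gt[OF _ this t'(2)] fin have dlge: "snd x - 1 < drop_level a ?H' (fst x)" by simp
  have "drop_level a ?H' (fst x) = snd x"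
  proof (rule antisym)
    show "snd x \<le> drop_level a ?H' (fst x)" using dlge by simp
  next
    show "drop_level a ?H' (fst x) \<le> snd x"
    proof (rule ccontr)
      assume gt: "\<not> drop_level a ?H' (fst x) \<le> snd x"
      then obtain k where k: "drop_level a ?H' (fst x) = Suc k" by (metis not0_implies_Suc not_le_imp_less not_less0)
      from dl_support[OF _ k] fin obtain t'' where t'': "(t'', k) \<in> ?H'" "concurrent a (fst x) t''" by auto
      have "(t'', k) \<in> H" using t'' by simp
      then have "k \<le> snd x" using mxx t''(2) unfolding mx_def by fastforce
      moreover have "k \<noteq> snd x"
      proof
        assume "k = snd x"
        then have "fst x = t''" using D_samelevel[OF a, of "fst x" "snd x" v t''] xH t'' Hv by (metis DiffD1 prod.collapse)
        then show False using t'' \<open>k = snd x\<close> by (metis DiffD2 prod.collapse singletonI)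
      qed
      ultimately show False using gt k by simp
    qed
  qed
  then have HD: "D a (w' @ [fst x]) = H"
    using D_snoc[of a w' "fst x"] w'(2) xH by auto
  have sx0: "0 \<le> fst x" using r(4) xH by (cases x) auto
  have bl: "w' = butlast w' @ [last w']" using w'ne by simp
  let ?y0 = "(last w', drop_level a (D a (butlast w')) (last w'))"
  have my0: "mx a ?H' ?y0" using mx_new[of a "butlast w'" "last w'"] bl w'(2) by metis
  have "fst x \<le> last w' + int a - 1"
  proof (cases "mx a H ?y0")
    case True
    then have "?y0 \<in> M" unfolding M_def mx_def by auto
    then have "fst x \<le> last w'" using xleft by fastforce
    then show ?thesis using a by simp
  next
    case False
    have y0H: "?y0 \<in> H" using my0 unfolding mx_def by auto
    from False y0H obtain z where z: "z \<in> H" "concurrent a (last w') (fst z)"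
        "\<not> snd z \<le> snd ?y0" unfolding mx_def by auto
    have "z = x"
    proof (rule ccontr)
      assume "z \<noteq> x"
      then have "z \<in> ?H'" using z by simp
      then show False using my0 z unfolding mx_def by auto
    qed
    then show ?thesis using z(2) unfolding conc_iff by auto
  qed
  then have "vq a 0 (w' @ [fst x])" using w'(1) w'ne sx0 vq_snoc by simp
  then show ?case using HD by blast
qed

theorem lemma5:
  fixes a m :: nat
  assumes "a \<ge> 3" and "m \<ge> 1"
  shows "\<exists>f. bij_betw f {H. right0_pyramid a H \<and> card H = m} {xs. positive_string a m xs}"
proof -
  have a: "0 < a" using assms by simp
  define Q where "Q = {w. vq a 0 w \<and> length w = m}"
  define P where "P = {H. right0_pyramid a H \<and> card H = m}"
  define S where "S = {xs. positive_string a m xs}"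
  have b1: "bij_betw (D a) Q P"
    unfolding bij_betw_def
  proof
    show "inj_on (D a) Q" unfolding inj_on_def Q_def using D_inj[OF a] by blast
    show "D a ` Q = P"
    proof
      show "D a ` Q \<subseteq> P"
      proof
        fix H assume "H \<in> D a ` Q"
        then obtain w where w: "vq a 0 w" "length w = m" "H = D a w" unfolding Q_def by auto
        then have "w \<noteq> []" using assms by auto
        then show "H \<in> P" unfolding P_def using D_right0[OF a w(1)] D_card[OF a] w by auto
      qed
    next
      show "P \<subseteq> D a ` Q"
      proof
        fix H assume "H \<in> P"
        then have r: "right0_pyramid a H" "card H = m" unfolding P_def by auto
        then have "card H = Suc (m - 1)" using assms by simp
        from D_surj[OF a r(1) this] obtain w where w: "vq a 0 w" "D a w = H" by auto
        then have "length w = m" using D_card[OF a, of w] r by simp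
        then show "H \<in> D a ` Q" unfolding Q_def using w by auto
      qed
    qed
  qed
  have b2: "bij_betw (dec a 0) S Q"
    unfolding bij_betw_def
  proof
    show "inj_on (dec a 0) S"
    proof (rule inj_onI)
      fix x y assume "x \<in> S" "y \<in> S" "dec a 0 x = dec a 0 y"
      then have "pos a 0 x" "pos a 0 y" "dec a 0 x = dec a 0 y" unfolding S_def positive_iff by auto
      then have "enc a 0 (dec a 0 x) = enc a 0 (dec a 0 y)" by simp
      then show "x = y" using enc_dec \<open>pos a 0 x\<close> \<open>pos a 0 y\<close> by simp
    qed
    show "dec a 0 ` S = Q"
    proof
      show "dec a 0 ` S \<subseteq> Q" unfolding S_def Q_def positive_iff using pos_dec by auto
    next
      show "Q \<subseteq> dec a 0 ` S"
      proof
        fix q assume "q \<in> Q"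
        then have q: "vq a 0 q" "length q = m" unfolding Q_def by auto
        from enc_ok[OF q(1) _ a] have "pos a 0 (enc a 0 q)" "dec a 0 (enc a 0 q) = q"
          "count_list (enc a 0 q) 1 = m" using q(2) by auto
        then show "q \<in> dec a 0 ` S" unfolding S_def positive_iff by (metis (mono_tags) image_eqI mem_Collect_eq)
      qed
    qed
  qed
  have "bij_betw (D a \<circ> dec a 0) S P" using bij_betw_trans[OF b2 b1] .
  then have "bij_betw (inv_into S (D a \<circ> dec a 0)) P S" by (rule bij_betw_inv_into)
  then show ?thesis unfolding P_def S_def by blast
qed


end
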